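(* Let $G$ be a locally compact group, $p\in(1,\infty)$, $(\pi,E)\in\mathrm{Rep}_p(G)$ and $u\in A_{p,\pi}$. Then $$\|u\|_{A_{p,\pi}}=\inf\Big\{\sum_n\|t_n\|\|s_n\|:\ u(x)=\sum_n\langle\rho_n(x)t_n,s_n\rangle,\ x\in G\Big\},$$ where the infimum is taken over all sequences $((\rho_n,F_n))_{n\in\mathbb{N}}\subseteq\mathrm{Cyc}_{p,\pi}(G)$ and vectors $t_n\in F_n$, $s_n\in F_n^*$ giving such a representation of $u$.
   Context: A representation $(\pi,E)$ of $G$ is a strongly continuous homomorphism from $G$ into the invertible isometries of a Banach space $E$; $\pi(f)=\int_G f(x)\pi(x)dx$ for $f\in L_1(G)$. A $QSL_p$-space is a Banach space isometric to a quotient of a closed subspace of an $L_p$-space; $\mathrm{Rep}_p(G)$ denotes the representations of $G$ on $QSL_p$-spaces. $A_{p,\pi}$ is the space of functions $u(x)=\sum_n\langle\pi(x)\xi_n,\eta_n\rangle$ with $\xi_n\in E$, $\eta_n\in E^*$, $\sum_n\|\xi_n\|\|\eta_n\|<\infty$, with norm $\|u\|_{A_{p,\pi}}$ the infimum of $\sum_n\|\xi_n\|\|\eta_n\|$ over all such expressions. A subrepresentation of $(\pi,E)$ is $(\rho,F)$ with $F$ a closed subspace of $E$ invariant under $\pi$ and $\rho(x)=\pi(x)|_F$; it is cyclic if there is $\xi_0\in F$ with $\rho(L_1(G))\xi_0$ dense in $F$. $\mathrm{Cyc}_{p,\pi}(G)$ denotes the set of cyclic subrepresentations of $(\pi,E)$.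 *)

theory Defs
  imports "HOL-Analysis.Analysis"
begin

text \<open>Complex Banach spaces are modelled as real Banach spaces of type 'e together with
 a complex structure J (multiplication by the imaginary unit), compatible with the norm.\<close>

definition complex_structure :: "('e::real_normed_vector \<Rightarrow> 'e) \<Rightarrow> bool" where
  "complex_structure J \<longleftrightarrow> bounded_linear J \<and> (\<forall>x. J (J x) = - x) \<and>
     (\<forall>\<theta> x. norm (cos \<theta> *\<^sub>R x + sin \<theta> *\<^sub>R J x) = norm x)"

definition cscale :: "('e::real_vector \<Rightarrow> 'e) \<Rightarrow> complex \<Rightarrow> 'e \<Rightarrow> 'e" where
  "cscale J c v = Re c *\<^sub>R v + Im c *\<^sub>R J v"

definition csubspace :: "('e::real_vector \<Rightarrow> 'e) \<Rightarrow> 'e set \<Rightarrow> bool" where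
  "csubspace J F \<longleftrightarrow> 0 \<in> F \<and> (\<forall>x\<in>F. \<forall>y\<in>F. x + y \<in> F) \<and>
     (\<forall>r. \<forall>x\<in>F. r *\<^sub>R x \<in> F) \<and> (\<forall>x\<in>F. J x \<in> F)"

definition cdual :: "('e::real_normed_vector \<Rightarrow> 'e) \<Rightarrow> 'e set \<Rightarrow> ('e \<Rightarrow> complex) \<Rightarrow> bool" where
  "cdual J F s \<longleftrightarrow> (\<forall>x\<in>F. \<forall>y\<in>F. s (x + y) = s x + s y) \<and>
     (\<forall>r. \<forall>x\<in>F. s (r *\<^sub>R x) = of_real r * s x) \<and>
     (\<forall>x\<in>F. s (J x) = \<i> * s x) \<and>
     (\<exists>C. \<forall>x\<in>F. cmod (s x) \<le> C * norm x)"

definition dual_norm :: "'e::real_normed_vector set \<Rightarrow> ('e \<Rightarrow> complex) \<Rightarrow> real" where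
  "dual_norm F s = Sup ((\<lambda>x. cmod (s x)) ` {x\<in>F. norm x \<le> 1})"

definition is_rep :: "('e::real_normed_vector \<Rightarrow> 'e) \<Rightarrow> ('g::topological_group_add \<Rightarrow> 'e \<Rightarrow> 'e) \<Rightarrow> bool" where
  "is_rep J \<pi> \<longleftrightarrow>
     (\<forall>x. bounded_linear (\<pi> x) \<and> (\<forall>v. \<pi> x (J v) = J (\<pi> x v)) \<and>
          (\<forall>v. norm (\<pi> x v) = norm v) \<and> surj (\<pi> x)) \<and>
     (\<forall>x y. \<pi> (x + y) = \<pi> x \<circ> \<pi> y) \<and> \<pi> 0 = id \<and>
     (\<forall>v. continuous_on UNIV (\<lambda>x. \<pi> x v))"

definition left_haar :: "'g::topological_group_add measure \<Rightarrow> bool" where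
  "left_haar \<mu> \<longleftrightarrow> sets \<mu> = sets borel \<and>
     (\<forall>x A. A \<in> sets borel \<longrightarrow> emeasure \<mu> ((\<lambda>y. x + y) ` A) = emeasure \<mu> A) \<and>
     (\<forall>K. compact K \<longrightarrow> emeasure \<mu> K < \<infinity>) \<and>
     (\<forall>U. open U \<and> U \<noteq> {} \<longrightarrow> emeasure \<mu> U > 0) \<and>
     (\<forall>A \<in> sets borel. emeasure \<mu> A = (INF U\<in>{U. open U \<and> A \<subseteq> U}. emeasure \<mu> U)) \<and>
     (\<forall>U. open U \<longrightarrow> emeasure \<mu> U = (SUP K\<in>{K. compact K \<and> K \<subseteq> U}. emeasure \<mu> K))"

text \<open>rho(L_1(G)) xi: the vectors pi(f) xi = int f(x) pi(x) xi dx, f in L_1(G),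
 the (vector valued) integral being characterised weakly\<close>
definition L1_orbit :: "'g::topological_group_add measure \<Rightarrow> ('e::real_normed_vector \<Rightarrow> 'e) \<Rightarrow>
    ('g \<Rightarrow> 'e \<Rightarrow> 'e) \<Rightarrow> 'e \<Rightarrow> 'e set" where
  "L1_orbit \<mu> J \<pi> \<xi> = {v. \<exists>f::'g \<Rightarrow> complex. integrable \<mu> f \<and>
      (\<forall>\<phi>::'e \<Rightarrow> real. bounded_linear \<phi> \<longrightarrow>
          \<phi> v = (\<integral>x. \<phi> (cscale J (f x) (\<pi> x \<xi>)) \<partial>\<mu>))}"

definition cyclic_sub :: "'g::topological_group_add measure \<Rightarrow> ('e::real_normed_vector \<Rightarrow> 'e) \<Rightarrow>
    ('g \<Rightarrow> 'e \<Rightarrow> 'e) \<Rightarrow> 'e set \<Rightarrow> bool" where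
  "cyclic_sub \<mu> J \<pi> F \<longleftrightarrow> closed F \<and> csubspace J F \<and> (\<forall>x. \<pi> x ` F \<subseteq> F) \<and>
     (\<exists>\<xi>0\<in>F. F \<subseteq> closure (L1_orbit \<mu> J \<pi> \<xi>0))"

definition Lp_mem :: "'m measure \<Rightarrow> real \<Rightarrow> ('m \<Rightarrow> complex) \<Rightarrow> bool" where
  "Lp_mem M p f \<longleftrightarrow> f \<in> borel_measurable M \<and> integrable M (\<lambda>x. cmod (f x) powr p)"

definition Lp_norm :: "'m measure \<Rightarrow> real \<Rightarrow> ('m \<Rightarrow> complex) \<Rightarrow> real" where
  "Lp_norm M p f = (\<integral>x. cmod (f x) powr p \<partial>M) powr (1 / p)"

text \<open>E (with complex structure J) is isometric to a quotient S / ker T of a closed subspace S of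
 L_p(M): T is a complex linear surjection S \<rightarrow> E with quotient norm.\<close>
definition QSL :: "real \<Rightarrow> ('e::real_normed_vector \<Rightarrow> 'e) \<Rightarrow> 'm measure \<Rightarrow> bool" where
  "QSL p J M \<longleftrightarrow> (\<exists>(S :: ('m \<Rightarrow> complex) set) (T :: ('m \<Rightarrow> complex) \<Rightarrow> 'e).
     S \<subseteq> {f. Lp_mem M p f} \<and>
     (\<forall>f\<in>S. \<forall>g\<in>S. (\<lambda>x. f x + g x) \<in> S) \<and> (\<forall>c. \<forall>f\<in>S. (\<lambda>x. c * f x) \<in> S) \<and>
     (\<forall>f g. (\<forall>n. g n \<in> S) \<and> Lp_mem M p f \<and>
            (\<lambda>n. Lp_norm M p (\<lambda>x. g n x - f x)) \<longlonglongrightarrow> 0 \<longrightarrow> f \<in> S) \<and>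
     (\<forall>f\<in>S. \<forall>g\<in>S. T (\<lambda>x. f x + g x) = T f + T g) \<and>
     (\<forall>c. \<forall>f\<in>S. T (\<lambda>x. c * f x) = cscale J c (T f)) \<and>
     T ` S = UNIV \<and>
     (\<forall>f\<in>S. norm (T f) = Inf (Lp_norm M p ` {g\<in>S. T g = T f})))"

definition A_reps :: "('e::real_normed_vector \<Rightarrow> 'e) \<Rightarrow> ('g \<Rightarrow> 'e \<Rightarrow> 'e) \<Rightarrow> ('g \<Rightarrow> complex) \<Rightarrow> real set" where
  "A_reps J \<pi> u = {(\<Sum>n. norm (\<xi> n) * dual_norm UNIV (\<eta> n)) | \<xi> \<eta>.
      (\<forall>n. cdual J UNIV (\<eta> n)) \<and> summable (\<lambda>n. norm (\<xi> n) * dual_norm UNIV (\<eta> n)) \<and>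
      (\<forall>x. (\<lambda>n. \<eta> n (\<pi> x (\<xi> n))) sums u x)}"

definition A_mem :: "('e::real_normed_vector \<Rightarrow> 'e) \<Rightarrow> ('g \<Rightarrow> 'e \<Rightarrow> 'e) \<Rightarrow> ('g \<Rightarrow> complex) \<Rightarrow> bool" where
  "A_mem J \<pi> u \<longleftrightarrow> A_reps J \<pi> u \<noteq> {}"

definition A_norm :: "('e::real_normed_vector \<Rightarrow> 'e) \<Rightarrow> ('g \<Rightarrow> 'e \<Rightarrow> 'e) \<Rightarrow> ('g \<Rightarrow> complex) \<Rightarrow> real" where
  "A_norm J \<pi> u = Inf (A_reps J \<pi> u)"

end

theory Submission
  imports Defs
begin

definition hb_ext :: "'e::real_normed_vector set \<Rightarrow> ('e \<Rightarrow> real) \<Rightarrow> real \<Rightarrow> ('e \<times> real) set \<Rightarrow> bool" where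
  "hb_ext F \<phi> C G \<longleftrightarrow> (\<forall>x y z. (x,y)\<in>G \<and> (x,z)\<in>G \<longrightarrow> y = z) \<and> (\<forall>x\<in>F. (x, \<phi> x) \<in> G) \<and>
     (\<forall>x y a b. (x,a)\<in>G \<and> (y,b)\<in>G \<longrightarrow> (x+y, a+b) \<in> G) \<and>
     (\<forall>x a r. (x,a)\<in>G \<longrightarrow> (r *\<^sub>R x, r*a) \<in> G) \<and> (\<forall>x a. (x,a)\<in>G \<longrightarrow> a \<le> C * norm x)"

lemma hb_extD:
  assumes "hb_ext F \<phi> C G"
  shows "(x,c)\<in>G \<Longrightarrow> (x,d)\<in>G \<Longrightarrow> c = d" "x\<in>F \<Longrightarrow> (x, \<phi> x) \<in> G"
    "(x,a)\<in>G \<Longrightarrow> (y,b)\<in>G \<Longrightarrow> (x+y, a+b) \<in> G" "(x,a)\<in>G \<Longrightarrow> (r *\<^sub>R x, r*a) \<in> G"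
    "(x,a)\<in>G \<Longrightarrow> a \<le> C * norm x"
  using assms unfolding hb_ext_def by blast+

lemma hb_step:
  fixes G :: "('e::real_normed_vector \<times> real) set"
  assumes exG: "hb_ext F \<phi> C G" and x0: "x0 \<notin> fst ` G" and F0: "0 \<in> F" and C: "C \<ge> 0"
  shows "\<exists>G'. hb_ext F \<phi> C G' \<and> G \<subseteq> G' \<and> G' \<noteq> G"
proof -
  let ?H = "fst ` G"
  define h where "h x = (THE a. (x,a) \<in> G)" for x
  note D = hb_extD[OF exG]
  have sv: "(x,a)\<in>G \<Longrightarrow> (x,b)\<in>G \<Longrightarrow> a = b" for x a b by (rule D(1))
  have hG: "x \<in> ?H \<Longrightarrow> (x, h x) \<in> G" for x
  proof -
    assume "x \<in> ?H"
    then obtain a where a: "(x, a) \<in> G" by force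
    show ?thesis unfolding h_def by (rule theI[of _ a]) (use a sv in auto)
  qed
  have inH: "(x,a)\<in>G \<Longrightarrow> x \<in> ?H" for x a by (metis fst_conv image_eqI)
  have hG': "(x,a)\<in>G \<Longrightarrow> h x = a" for x a
    by (rule sv[OF hG[OF inH]]) assumption+
  have Hadd: "x \<in> ?H \<Longrightarrow> y \<in> ?H \<Longrightarrow> x + y \<in> ?H \<and> h (x+y) = h x + h y" for x y
  proof -
    assume "x \<in> ?H" "y \<in> ?H"
    then have "(x+y, h x + h y) \<in> G" using hG by (intro D(3))
    then show ?thesis by (meson hG' inH)
  qed
  have Hsc: "x \<in> ?H \<Longrightarrow> r *\<^sub>R x \<in> ?H \<and> h (r *\<^sub>R x) = r * h x" for x r
  proof -
    assume "x \<in> ?H"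
    then have "(r *\<^sub>R x, r * h x) \<in> G" using hG by (intro D(4))
    then show ?thesis by (meson hG' inH)
  qed
  have hb: "x \<in> ?H \<Longrightarrow> h x \<le> C * norm x" for x using hG by (intro D(5))
  have H0: "0 \<in> ?H" using F0 D(2) inH by blast
  have Hminus: "x \<in> ?H \<Longrightarrow> y \<in> ?H \<Longrightarrow> x - y \<in> ?H" for x y
    using Hadd[of x "(-1) *\<^sub>R y"] Hsc[of y "-1"] by simp
  define L where "L = (\<lambda>y. h y - C * norm (y - x0)) ` ?H"
  have LU: "h y - C * norm (y - x0) \<le> C * norm (z + x0) - h z" if "y \<in> ?H" "z \<in> ?H" for y z
  proof -
    have "h y + h z = h (y + z)" using Hadd that by simp
    also have "\<dots> \<le> C * norm (y + z)" using hb Hadd that by blast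
    finally have 1: "h y + h z \<le> C * norm (y + z)" .
    have "norm (y + z) \<le> norm (y - x0) + norm (z + x0)"
      using norm_triangle_ineq[of "y - x0" "z + x0"] by simp
    then have "C * norm (y + z) \<le> C * norm (y - x0) + C * norm (z + x0)"
      using C by (metis distrib_left mult_left_mono)
    then show ?thesis using 1 by linarith
  qed
  have Lne: "L \<noteq> {}" using H0 unfolding L_def by blast
  have Lbdd: "bdd_above L" unfolding L_def bdd_above_def using LU H0 by blast
  define a where "a = Sup L"
  have la: "h y - C * norm (y - x0) \<le> a" if "y \<in> ?H" for y
    unfolding a_def L_def by (rule cSup_upper) (use that Lbdd L_def in auto)
  have au: "a \<le> C * norm (z + x0) - h z" if "z \<in> ?H" for z
    unfolding a_def by (rule cSup_least) (use Lne L_def LU that in auto)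
  define G' where "G' = {(y + t *\<^sub>R x0, h y + t * a) | y t. y \<in> ?H}"
  have uniq: "y1 + t1 *\<^sub>R x0 = y2 + t2 *\<^sub>R x0 \<Longrightarrow> y1 \<in> ?H \<Longrightarrow> y2 \<in> ?H \<Longrightarrow> t1 = t2 \<and> y1 = y2"
    for y1 y2 t1 t2
  proof -
    assume e: "y1 + t1 *\<^sub>R x0 = y2 + t2 *\<^sub>R x0" and y: "y1 \<in> ?H" "y2 \<in> ?H"
    show ?thesis
    proof (cases "t1 = t2")
      case True then show ?thesis using e by simp
    next
      case False
      have eq: "(t1 - t2) *\<^sub>R x0 = y2 - y1" using e by (simp add: algebra_simps)
      have "x0 = (1 / (t1 - t2)) *\<^sub>R ((t1 - t2) *\<^sub>R x0)" using False by simp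
      then have "x0 = (1 / (t1 - t2)) *\<^sub>R (y2 - y1)" using eq by simp
      then have "x0 \<in> ?H" using Hsc Hminus y by metis
      then show ?thesis using x0 by blast
    qed
  qed
  have bound: "h y + t * a \<le> C * norm (y + t *\<^sub>R x0)" if y: "y \<in> ?H" for y t
  proof (cases t "0::real" rule: linorder_cases)
    case equal then show ?thesis using hb y by simp
  next
    case greater
    have z: "(1/t) *\<^sub>R y \<in> ?H" using Hsc y by blast
    have "a \<le> C * norm ((1/t) *\<^sub>R y + x0) - h ((1/t) *\<^sub>R y)" using au z .
    also have "(1/t) *\<^sub>R y + x0 = (1/t) *\<^sub>R (y + t *\<^sub>R x0)" using greater by (simp add: algebra_simps)
    also have "h ((1/t) *\<^sub>R y) = (1/t) * h y" using Hsc y by blast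
    finally have "a \<le> C * ((1/t) * norm (y + t *\<^sub>R x0)) - (1/t) * h y" using greater by simp
    then have "t * a \<le> t * (C * ((1/t) * norm (y + t *\<^sub>R x0)) - (1/t) * h y)"
      using greater by (simp add: mult_left_mono)
    also have "\<dots> = C * norm (y + t *\<^sub>R x0) - h y" using greater by (simp add: algebra_simps)
    finally show ?thesis by simp
  next
    case less
    define s where "s = - t"
    have s: "s > 0" using less s_def by simp
    have z: "(1/s) *\<^sub>R y \<in> ?H" using Hsc y by blast
    have "h ((1/s) *\<^sub>R y) - C * norm ((1/s) *\<^sub>R y - x0) \<le> a" using la z .
    also have "(1/s) *\<^sub>R y - x0 = (1/s) *\<^sub>R (y + t *\<^sub>R x0)" using s by (simp add: s_def algebra_simps)
    also have "h ((1/s) *\<^sub>R y) = (1/s) * h y" using Hsc y by blast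
    finally have "(1/s) * h y - C * ((1/s) * norm (y + t *\<^sub>R x0)) \<le> a" using s by simp
    then have "s * ((1/s) * h y - C * ((1/s) * norm (y + t *\<^sub>R x0))) \<le> s * a"
      using s by (simp add: mult_left_mono)
    then have "h y - C * norm (y + t *\<^sub>R x0) \<le> s * a" using s by (simp add: algebra_simps)
    then show ?thesis by (simp add: s_def)
  qed
  have "hb_ext F \<phi> C G'"
    unfolding hb_ext_def
  proof (intro conjI allI impI ballI)
    fix x y z assume "(x, y) \<in> G' \<and> (x, z) \<in> G'"
    then obtain y1 t1 y2 t2 where "x = y1 + t1 *\<^sub>R x0" "y = h y1 + t1 * a" "y1 \<in> ?H"
      "x = y2 + t2 *\<^sub>R x0" "z = h y2 + t2 * a" "y2 \<in> ?H" unfolding G'_def by blast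
    then show "y = z" using uniq by metis
  next
    fix x assume "x \<in> F"
    then have "(x, \<phi> x) \<in> G" by (rule D(2))
    then have "x \<in> ?H" "h x = \<phi> x" by (meson hG' inH)+
    moreover have "(x, \<phi> x) = (x + 0 *\<^sub>R x0, h x + 0 * a)" using \<open>h x = \<phi> x\<close> by simp
    ultimately show "(x, \<phi> x) \<in> G'" unfolding G'_def by blast
  next
    fix x y c b assume "(x, c) \<in> G' \<and> (y, b) \<in> G'"
    then obtain y1 t1 y2 t2 where "x = y1 + t1 *\<^sub>R x0" "c = h y1 + t1 * a" "y1 \<in> ?H"
      "y = y2 + t2 *\<^sub>R x0" "b = h y2 + t2 * a" "y2 \<in> ?H" unfolding G'_def by blast
    moreover have "x + y = (y1 + y2) + (t1 + t2) *\<^sub>R x0" "c + b = h (y1 + y2) + (t1 + t2) * a"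
      using calculation Hadd by (auto simp: algebra_simps)
    ultimately show "(x + y, c + b) \<in> G'" unfolding G'_def using Hadd by blast
  next
    fix x c r assume "(x, c) \<in> G'"
    then obtain y1 t1 where "x = y1 + t1 *\<^sub>R x0" "c = h y1 + t1 * a" "y1 \<in> ?H" unfolding G'_def by blast
    moreover have "r *\<^sub>R x = r *\<^sub>R y1 + (r * t1) *\<^sub>R x0" "r * c = h (r *\<^sub>R y1) + (r * t1) * a"
      using calculation Hsc by (auto simp: algebra_simps)
    ultimately show "(r *\<^sub>R x, r * c) \<in> G'" unfolding G'_def using Hsc by blast
  next
    fix x c assume "(x, c) \<in> G'"
    then obtain y1 t1 where "x = y1 + t1 *\<^sub>R x0" "c = h y1 + t1 * a" "y1 \<in> ?H" unfolding G'_def by blast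
    then show "c \<le> C * norm x" using bound by simp
  qed
  moreover have "G \<subseteq> G'"
  proof
    fix p assume p: "p \<in> G"
    obtain x c where "p = (x, c)" by force
    with p have "x \<in> ?H" "h x = c" by (meson hG' inH)+
    moreover have "p = (x + 0 *\<^sub>R x0, h x + 0 * a)" using \<open>h x = c\<close> \<open>p = (x,c)\<close> by simp
    ultimately show "p \<in> G'" unfolding G'_def by blast
  qed
  moreover have "(x0, a) = (0 + 1 *\<^sub>R x0, h 0 + 1 * a)" using H0 Hsc[of 0 0] by simp
  then have "(x0, a) \<in> G'" unfolding G'_def using H0 by blast
  then have "G' \<noteq> G" using x0 by force
  ultimately show ?thesis by blast
qed


lemma real_HB:
  fixes \<phi> :: "'e::real_normed_vector \<Rightarrow> real"
  assumes F: "subspace F" and add: "\<And>x y. x\<in>F \<Longrightarrow> y\<in>F \<Longrightarrow> \<phi> (x+y) = \<phi> x + \<phi> y"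
    and sc: "\<And>x r. x\<in>F \<Longrightarrow> \<phi> (r *\<^sub>R x) = r * \<phi> x"
    and bd: "\<And>x. x\<in>F \<Longrightarrow> \<phi> x \<le> C * norm x" and C: "C \<ge> 0"
  shows "\<exists>\<Phi>. linear \<Phi> \<and> (\<forall>x\<in>F. \<Phi> x = \<phi> x) \<and> (\<forall>x. \<Phi> x \<le> C * norm x)"
proof -
  let ?A = "{G. hb_ext F \<phi> C G}"
  define G0 where "G0 = (\<lambda>x. (x, \<phi> x)) ` F"
  have F0: "0 \<in> F" using F by (simp add: subspace_def)
  have Fa: "x \<in> F \<Longrightarrow> y \<in> F \<Longrightarrow> x + y \<in> F" for x y using F by (simp add: subspace_def)
  have Fs: "x \<in> F \<Longrightarrow> r *\<^sub>R x \<in> F" for x r using F by (simp add: subspace_def)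
  have G0: "hb_ext F \<phi> C G0" unfolding hb_ext_def G0_def
  proof (intro conjI allI impI ballI)
    fix x a y b assume "(x, a) \<in> (\<lambda>x. (x, \<phi> x)) ` F \<and> (y, b) \<in> (\<lambda>x. (x, \<phi> x)) ` F"
    then have "x \<in> F" "y \<in> F" "a = \<phi> x" "b = \<phi> y" by auto
    then show "(x + y, a + b) \<in> (\<lambda>x. (x, \<phi> x)) ` F" using add Fa by force
  next
    fix x a r assume "(x, a) \<in> (\<lambda>x. (x, \<phi> x)) ` F"
    then have "x \<in> F" "a = \<phi> x" by auto
    then show "(r *\<^sub>R x, r * a) \<in> (\<lambda>x. (x, \<phi> x)) ` F" using sc Fs by force
  next
    fix x a assume "(x, a) \<in> (\<lambda>x. (x, \<phi> x)) ` F"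
    then have "x \<in> F" "a = \<phi> x" by auto
    then show "a \<le> C * norm x" using bd by simp
  qed auto
  have "\<exists>M\<in>?A. \<forall>X\<in>?A. M \<subseteq> X \<longrightarrow> X = M"
  proof (rule Zorn_Lemma2, intro ballI)
    fix Ch assume Ch: "Ch \<in> chains ?A"
    show "\<exists>U\<in>?A. \<forall>X\<in>Ch. X \<subseteq> U"
    proof (cases "Ch = {}")
      case True then show ?thesis using G0 by blast
    next
      case False
      have sub: "\<And>X. X \<in> Ch \<Longrightarrow> hb_ext F \<phi> C X" using Ch unfolding chains_def by blast
      have ch: "\<And>X Y. X\<in>Ch \<Longrightarrow> Y\<in>Ch \<Longrightarrow> X \<subseteq> Y \<or> Y \<subseteq> X"
        using Ch unfolding chains_def chain_subset_def by blast
      have two: "\<exists>Z\<in>Ch. p \<in> Z \<and> q \<in> Z" if pq: "p \<in> \<Union>Ch" "q \<in> \<Union>Ch" for p q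
      proof -
        obtain X Y where XY: "X \<in> Ch" "Y \<in> Ch" "p \<in> X" "q \<in> Y" using pq by blast
        from ch[OF XY(1,2)] show ?thesis using XY by blast
      qed
      have "hb_ext F \<phi> C (\<Union>Ch)"
        unfolding hb_ext_def
      proof (intro conjI allI impI ballI)
        fix x c d assume "(x,c) \<in> \<Union>Ch \<and> (x,d) \<in> \<Union>Ch"
        then obtain Z where "Z \<in> Ch" "(x,c)\<in>Z" "(x,d)\<in>Z" using two by blast
        then show "c = d" using sub hb_extD(1) by blast
      next
        fix x assume "x \<in> F"
        obtain Z where "Z \<in> Ch" using False by blast
        then show "(x, \<phi> x) \<in> \<Union>Ch" using sub hb_extD(2) \<open>x \<in> F\<close> by blast
      next
        fix x y a b assume "(x,a) \<in> \<Union>Ch \<and> (y,b) \<in> \<Union>Ch"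
        then obtain Z where "Z \<in> Ch" "(x,a)\<in>Z" "(y,b)\<in>Z" using two by blast
        then show "(x+y, a+b) \<in> \<Union>Ch" using sub hb_extD(3) by blast
      next
        fix x a r assume "(x,a) \<in> \<Union>Ch"
        then obtain Z where "Z \<in> Ch" "(x,a)\<in>Z" by blast
        then show "(r *\<^sub>R x, r*a) \<in> \<Union>Ch" using sub hb_extD(4) by blast
      next
        fix x a assume "(x,a) \<in> \<Union>Ch"
        then obtain Z where "Z \<in> Ch" "(x,a)\<in>Z" by blast
        then show "a \<le> C * norm x" using sub hb_extD(5) by blast
      qed
      then show ?thesis by blast
    qed
  qed
  then obtain M where M: "hb_ext F \<phi> C M" and max: "\<And>X. hb_ext F \<phi> C X \<Longrightarrow> M \<subseteq> X \<Longrightarrow> X = M"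
    by blast
  have dom: "x \<in> fst ` M" for x
  proof (rule ccontr)
    assume "x \<notin> fst ` M"
    from hb_step[OF M this F0 C] obtain G' where "hb_ext F \<phi> C G'" "M \<subseteq> G'" "G' \<noteq> M" by blast
    then show False using max by blast
  qed
  note D = hb_extD[OF M]
  define \<Phi> where "\<Phi> x = (THE a. (x,a) \<in> M)" for x
  have PM: "(x, \<Phi> x) \<in> M" for x
  proof -
    obtain a where a: "(x, a) \<in> M" using dom[of x] by force
    show ?thesis unfolding \<Phi>_def by (rule theI[of _ a]) (use a D(1) in auto)
  qed
  have PM': "(x,a) \<in> M \<Longrightarrow> \<Phi> x = a" for x a by (rule D(1)[OF PM])
  have "linear \<Phi>"
  proof (rule linearI)
    fix x y show "\<Phi> (x + y) = \<Phi> x + \<Phi> y" by (rule PM'[OF D(3)[OF PM PM]])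
  next
    fix r x show "\<Phi> (r *\<^sub>R x) = r *\<^sub>R \<Phi> x" using PM'[OF D(4)[OF PM]] by simp
  qed
  moreover have "\<forall>x\<in>F. \<Phi> x = \<phi> x" using PM' D(2) by blast
  moreover have "\<forall>x. \<Phi> x \<le> C * norm x" using D(5)[OF PM] by blast
  ultimately show ?thesis by blast
qed

lemma norming:
  fixes w :: "'e::real_normed_vector"
  shows "\<exists>\<phi>::'e\<Rightarrow>real. bounded_linear \<phi> \<and> (\<forall>x. \<bar>\<phi> x\<bar> \<le> norm x) \<and> \<phi> w = norm w"
proof (cases "w = 0")
  case True
  then show ?thesis by (intro exI[of _ "\<lambda>_. 0"]) (auto simp: bounded_linear_zero)
next
  case False
  define F where "F = range (\<lambda>r. r *\<^sub>R w)"
  define \<phi> where "\<phi> x = (SOME r. x = r *\<^sub>R w) * norm w" for x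
  have coef: "(SOME r'. r *\<^sub>R w = r' *\<^sub>R w) = r" for r
  proof -
    have "r *\<^sub>R w = (SOME r'. r *\<^sub>R w = r' *\<^sub>R w) *\<^sub>R w" by (rule someI[of _ r]) simp
    then show ?thesis using False by (metis scaleR_cancel_right)
  qed
  have \<phi>r: "\<phi> (r *\<^sub>R w) = r * norm w" for r by (simp only: \<phi>_def coef)
  have sF: "subspace F" unfolding subspace_def F_def
    by (auto simp: scaleR_add_left[symmetric] image_iff)
  obtain \<Phi> where P: "linear \<Phi>" "\<forall>x\<in>F. \<Phi> x = \<phi> x" "\<forall>x. \<Phi> x \<le> 1 * norm x"
  proof (rule exE[OF real_HB[OF sF, of \<phi> 1]])
    fix x y assume "x \<in> F" "y \<in> F"
    then obtain a b where "x = a *\<^sub>R w" "y = b *\<^sub>R w" unfolding F_def by blast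
    then show "\<phi> (x + y) = \<phi> x + \<phi> y" using \<phi>r[of "a + b"] \<phi>r[of a] \<phi>r[of b]
      by (simp add: scaleR_add_left[symmetric] distrib_right)
  next
    fix x r assume "x \<in> F"
    then obtain a where "x = a *\<^sub>R w" unfolding F_def by blast
    then show "\<phi> (r *\<^sub>R x) = r * \<phi> x" using \<phi>r[of "r * a"] \<phi>r[of a] by simp
  next
    fix x assume "x \<in> F"
    then obtain a where "x = a *\<^sub>R w" unfolding F_def by blast
    then show "\<phi> x \<le> 1 * norm x" using \<phi>r[of a] by (simp add: mult_right_mono)
  qed auto
  have abs: "\<bar>\<Phi> x\<bar> \<le> norm x" for x
    using P(3)[rule_format, of x] P(3)[rule_format, of "-x"] linear_neg[OF P(1), of x] by simp
  have "bounded_linear \<Phi>"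
    using P(1) abs by (intro bounded_linear_intro[of _ 1]) (auto simp: linear_add linear_scale)
  moreover have "\<Phi> w = norm w" using P(2) \<phi>r[of 1] unfolding F_def by (metis rangeI scaleR_one mult_1)
  ultimately show ?thesis using abs by blast
qed


lemma csubspace_subspace: "csubspace J F \<Longrightarrow> subspace F"
  unfolding csubspace_def subspace_def by blast

lemma cdual_0: "cdual J F s \<Longrightarrow> 0 \<in> F \<Longrightarrow> s 0 = 0"
  unfolding cdual_def by (metis mult_zero_left of_real_0 scaleR_zero_left)

lemma dual_norm_bdd: "cdual J F s \<Longrightarrow> bdd_above ((\<lambda>x. cmod (s x)) ` {x\<in>F. norm x \<le> 1})"
proof -
  assume "cdual J F s"
  then obtain C where C: "\<forall>x\<in>F. cmod (s x) \<le> C * norm x" unfolding cdual_def by blast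
  have "cmod (s x) \<le> \<bar>C\<bar>" if "x \<in> F" "norm x \<le> 1" for x
  proof -
    have "C * norm x \<le> \<bar>C\<bar> * norm x" by (simp add: mult_right_mono)
    also have "\<dots> \<le> \<bar>C\<bar>" using that by (simp add: mult_left_le)
    finally show ?thesis using C that by auto
  qed
  then show ?thesis unfolding bdd_above_def by blast
qed

lemma dual_norm_nonneg: "cdual J F s \<Longrightarrow> 0 \<in> F \<Longrightarrow> 0 \<le> dual_norm F s"
proof -
  assume s: "cdual J F s" and F0: "0 \<in> F"
  have "cmod (s 0) \<in> (\<lambda>x. cmod (s x)) ` {x\<in>F. norm x \<le> 1}" using F0 by (intro imageI) simp
  then have "cmod (s 0) \<le> dual_norm F s" unfolding dual_norm_def using dual_norm_bdd[OF s] by (rule cSup_upper)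
  then show ?thesis using cdual_0[OF s F0] by simp
qed

lemma dual_norm_bound:
  assumes s: "cdual J F s" and F: "csubspace J F" and x: "x \<in> F"
  shows "cmod (s x) \<le> dual_norm F s * norm x"
proof (cases "x = 0")
  case True then show ?thesis using cdual_0[OF s] F by (simp add: csubspace_def)
next
  case False
  define y where "y = (1 / norm x) *\<^sub>R x"
  have y: "y \<in> F" "norm y \<le> 1" using F x False unfolding y_def csubspace_def by auto
  have "cmod (s y) \<le> dual_norm F s" unfolding dual_norm_def
    by (rule cSup_upper) (use y dual_norm_bdd[OF s] in auto)
  moreover have "s y = of_real (1 / norm x) * s x" using s x unfolding y_def cdual_def by blast
  ultimately have "cmod (s x) / norm x \<le> dual_norm F s" by (simp add: norm_mult norm_divide)
  then show ?thesis using False by (simp add: divide_le_eq)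
qed

lemma dual_norm_le:
  assumes "0 \<in> F" "\<And>x. x \<in> F \<Longrightarrow> cmod (s x) \<le> C * norm x" "0 \<le> C"
  shows "dual_norm F s \<le> C"
  unfolding dual_norm_def
proof (rule cSup_least)
  show "(\<lambda>x. cmod (s x)) ` {x \<in> F. norm x \<le> 1} \<noteq> {}" using assms by auto
next
  fix a assume "a \<in> (\<lambda>x. cmod (s x)) ` {x \<in> F. norm x \<le> 1}"
  then obtain x where x: "x \<in> F" "norm x \<le> 1" "a = cmod (s x)" by blast
  have "C * norm x \<le> C" using x assms(3) by (simp add: mult_left_le)
  then show "a \<le> C" using assms(2)[OF x(1)] x by simp
qed

lemma dual_norm_mono:
  assumes "F \<subseteq> G" "0 \<in> F" "cdual J G s"
  shows "dual_norm F s \<le> dual_norm G s"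
  unfolding dual_norm_def
  by (rule cSup_subset_mono) (use assms dual_norm_bdd[OF assms(3)] in auto)

lemma complex_HB:
  fixes J :: "'e::real_normed_vector \<Rightarrow> 'e"
  assumes J: "complex_structure J" and F: "csubspace J F" and s: "cdual J F s"
  shows "\<exists>\<eta>. cdual J UNIV \<eta> \<and> (\<forall>x\<in>F. \<eta> x = s x) \<and> dual_norm UNIV \<eta> \<le> dual_norm F s"
proof -
  define C where "C = dual_norm F s"
  have F0: "0 \<in> F" using F unfolding csubspace_def by blast
  have C0: "C \<ge> 0" unfolding C_def by (rule dual_norm_nonneg[OF s F0])
  have sb: "x \<in> F \<Longrightarrow> cmod (s x) \<le> C * norm x" for x unfolding C_def by (rule dual_norm_bound[OF s F])
  have sadd: "x \<in> F \<Longrightarrow> y \<in> F \<Longrightarrow> s (x + y) = s x + s y" for x y using s unfolding cdual_def by blast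
  have ssc: "x \<in> F \<Longrightarrow> s (r *\<^sub>R x) = of_real r * s x" for x r using s unfolding cdual_def by blast
  have sJ: "x \<in> F \<Longrightarrow> s (J x) = \<i> * s x" for x using s unfolding cdual_def by blast
  have FJ: "x \<in> F \<Longrightarrow> J x \<in> F" for x using F unfolding csubspace_def by blast
  obtain \<Phi> where P: "linear \<Phi>" "\<forall>x\<in>F. \<Phi> x = Re (s x)" "\<forall>x. \<Phi> x \<le> C * norm x"
  proof (rule exE[OF real_HB[OF csubspace_subspace[OF F], of "\<lambda>x. Re (s x)" C]])
    fix x y assume "x \<in> F" "y \<in> F" then show "Re (s (x + y)) = Re (s x) + Re (s y)" using sadd by simp
  next
    fix x r assume "x \<in> F" then show "Re (s (r *\<^sub>R x)) = r * Re (s x)" using ssc by simp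
  next
    fix x assume "x \<in> F" then show "Re (s x) \<le> C * norm x" using sb complex_Re_le_cmod order_trans by blast
  qed (use C0 in auto)
  have Jl: "bounded_linear J" and JJ: "\<And>x. J (J x) = - x"
    and Jn: "\<And>\<theta> x. norm (cos \<theta> *\<^sub>R x + sin \<theta> *\<^sub>R J x) = norm x"
    using J unfolding complex_structure_def by auto
  have Jadd: "J (x + y) = J x + J y" for x y using Jl by (simp add: linear_simps)
  have Jsc: "J (r *\<^sub>R x) = r *\<^sub>R J x" for r x using Jl by (simp add: linear_simps)
  have Padd: "\<Phi> (x + y) = \<Phi> x + \<Phi> y" for x y using P(1) by (simp add: linear_add)
  have Psc: "\<Phi> (r *\<^sub>R x) = r * \<Phi> x" for r x using P(1) by (simp add: linear_scale)
  have Pneg: "\<Phi> (- x) = - \<Phi> x" for x using P(1) by (simp add: linear_neg)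
  define \<eta> where "\<eta> x = Complex (\<Phi> x) (- \<Phi> (J x))" for x
  have eadd: "\<eta> (x + y) = \<eta> x + \<eta> y" for x y unfolding \<eta>_def by (simp add: Jadd Padd complex_eq_iff)
  have esc: "\<eta> (r *\<^sub>R x) = of_real r * \<eta> x" for r x unfolding \<eta>_def by (simp add: Jsc Psc complex_eq_iff)
  have eJ: "\<eta> (J x) = \<i> * \<eta> x" for x unfolding \<eta>_def by (simp add: JJ Pneg complex_eq_iff)
  have erot: "\<eta> (a *\<^sub>R x + b *\<^sub>R J x) = Complex a b * \<eta> x" for a b x
    by (simp add: eadd esc eJ complex_eq_iff)
  have ebound: "cmod (\<eta> x) \<le> C * norm x" for x
  proof (cases "\<eta> x = 0")
    case True then show ?thesis using C0 by simp
  next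
    case False
    define z where "z = \<eta> x"
    define \<theta> where "\<theta> = - Arg z"
    have "Complex (cos \<theta>) (sin \<theta>) = cis \<theta>" by (simp add: complex_eq_iff)
    also have "cis \<theta> = inverse (cis (Arg z))" unfolding \<theta>_def by (simp add: cis_inverse)
    also have "\<dots> = inverse (sgn z)" using False z_def by (simp add: cis_Arg)
    finally have c: "Complex (cos \<theta>) (sin \<theta>) * z = of_real (cmod z)"
      using False z_def by (simp add: sgn_eq field_simps)
    have "cmod z = Re (\<eta> (cos \<theta> *\<^sub>R x + sin \<theta> *\<^sub>R J x))"
      using c by (simp add: erot z_def)
    also have "\<dots> = \<Phi> (cos \<theta> *\<^sub>R x + sin \<theta> *\<^sub>R J x)" unfolding \<eta>_def by simp
    also have "\<dots> \<le> C * norm x" using P(3) Jn by metis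
    finally show ?thesis unfolding z_def .
  qed
  have "cdual J UNIV \<eta>" unfolding cdual_def using eadd esc eJ ebound by blast
  moreover have "\<forall>x\<in>F. \<eta> x = s x"
  proof
    fix x assume x: "x \<in> F"
    have "Re (\<eta> x) = Re (s x)" unfolding \<eta>_def using P(2) x by simp
    moreover have "Im (\<eta> x) = Im (s x)" unfolding \<eta>_def using P(2) FJ[OF x] sJ[OF x] by simp
    ultimately show "\<eta> x = s x" by (simp add: complex_eq_iff)
  qed
  moreover have "dual_norm UNIV \<eta> \<le> C" by (rule dual_norm_le) (use ebound C0 in auto)
  ultimately show ?thesis unfolding C_def by blast
qed

lemma space_borelM: "sets \<mu> = sets borel \<Longrightarrow> space \<mu> = UNIV"
  using sets_eq_imp_space_eq by fastforce

lemma meas_cont: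
  fixes h :: "'g::topological_space \<Rightarrow> 'b::topological_space"
  assumes "sets \<mu> = sets borel" "continuous_on UNIV h"
  shows "h \<in> borel_measurable \<mu>"
  using borel_measurable_continuous_onI[OF assms(2)] measurable_cong_sets[OF assms(1) refl] by blast

lemma int_ind_cont:
  fixes h :: "'g::topological_space \<Rightarrow> real"
  assumes sets: "sets \<mu> = sets borel" and h: "continuous_on UNIV h" and A: "A \<in> sets borel" "emeasure \<mu> A < \<infinity>"
    and bd: "\<And>x. x \<in> A \<Longrightarrow> \<bar>h x\<bar> \<le> B"
  shows "integrable \<mu> (\<lambda>x. indicator A x * h x)"
proof (rule Bochner_Integration.integrable_bound)
  have A': "A \<in> sets \<mu>" using A sets by simp
  show "integrable \<mu> (\<lambda>x. indicator A x *\<^sub>R B)" using A' A(2) by (rule integrable_indicator)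
  have "h \<in> borel_measurable \<mu>" by (rule meas_cont[OF sets h])
  moreover have "indicator A \<in> borel_measurable \<mu>" using A' by simp
  ultimately show "(\<lambda>x. indicator A x * h x) \<in> borel_measurable \<mu>" by (intro borel_measurable_times)
  show "AE x in \<mu>. norm (indicator A x * h x) \<le> norm (indicator A x *\<^sub>R B)"
    by (intro AE_I2) (auto simp: indicator_def, meson bd abs_ge_self order_trans)
qed

lemma pettis_approx:
  fixes g :: "'g::t2_space \<Rightarrow> 'e::real_normed_vector" and \<mu> :: "'g measure"
  assumes sets: "sets \<mu> = sets borel" and g: "continuous_on UNIV g" and K: "compact K" "emeasure \<mu> K < \<infinity>"
    and e: "e > 0"
  shows "\<exists>I. \<forall>\<phi> B. bounded_linear \<phi> \<and> 0 \<le> B \<and> (\<forall>x. \<bar>\<phi> x\<bar> \<le> B * norm x) \<longrightarrow>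
            \<bar>\<phi> I - (\<integral>x. indicator K x * \<phi> (g x) \<partial>\<mu>)\<bar> \<le> B * e * measure \<mu> K"
proof -
  define V where "V y = g -` ball (g y) e" for y
  have Vo: "open (V y)" for y unfolding V_def by (intro open_vimage g open_ball)
  have "K \<subseteq> (\<Union>y\<in>K. V y)" using e unfolding V_def by auto
  then obtain T where T: "T \<subseteq> K" "finite T" "K \<subseteq> (\<Union>y\<in>T. V y)"
    using compactE_image[OF K(1), of K V] Vo by metis
  obtain N k where Nk: "T = k ` {i. i < (N::nat)}"
    using finite_imp_nat_seg_image_inj_on[OF T(2)] by blast
  define A where "A j = K \<inter> V (k j) - (\<Union>i\<in>{..<j}. V (k i))" for j
  have Kb: "K \<in> sets borel" using K(1) by (simp add: borel_closed compact_imp_closed)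
  have Ab: "A j \<in> sets borel" for j unfolding A_def using Kb Vo by (intro sets.Diff sets.Int sets.finite_UN) auto
  have AK: "A j \<subseteq> K" for j unfolding A_def by blast
  have AV: "x \<in> A j \<Longrightarrow> x \<in> V (k j)" for x j unfolding A_def by blast
  have Afin: "emeasure \<mu> (A j) < \<infinity>" for j
    using emeasure_mono[OF AK, of \<mu> j] K(2) Kb sets by (simp add: le_less_trans)
  define j0 where "j0 x = (LEAST j. x \<in> V (k j))" for x
  have j0: "x \<in> K \<Longrightarrow> j0 x < N \<and> x \<in> V (k (j0 x))" for x
  proof -
    assume "x \<in> K"
    then obtain j where j: "j < N" "x \<in> V (k j)" using T(3) Nk by blast
    have "x \<in> V (k (j0 x))" unfolding j0_def by (rule LeastI[of _ j]) (rule j(2))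
    moreover have "j0 x \<le> j" unfolding j0_def using j by (intro Least_le)
    ultimately show ?thesis using j by simp
  qed
  have Aiff: "x \<in> K \<Longrightarrow> x \<in> A j \<longleftrightarrow> j = j0 x" for x j
  proof -
    assume x: "x \<in> K"
    show ?thesis
    proof
      assume "x \<in> A j"
      then have "x \<in> V (k j)" "\<And>i. i < j \<Longrightarrow> x \<notin> V (k i)" unfolding A_def by auto
      then show "j = j0 x" unfolding j0_def
        by (metis (mono_tags, lifting) LeastI Least_le linorder_neqE_nat not_le)
    next
      assume "j = j0 x"
      moreover have "i < j0 x \<Longrightarrow> x \<notin> V (k i)" for i unfolding j0_def using not_less_Least by blast
      ultimately show "x \<in> A j" unfolding A_def using j0[OF x] x by auto
    qed
  qed
  have sumid: "(\<Sum>j<N. indicator (A j) x * d j) = (if x \<in> K then d (j0 x) else (0::real))" for x d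
  proof (cases "x \<in> K")
    case True
    have "(\<Sum>j<N. indicator (A j) x * d j) = (\<Sum>j<N. if j = j0 x then d j else 0)"
      by (intro sum.cong refl) (simp add: indicator_def Aiff[OF True])
    also have "\<dots> = d (j0 x)" using j0[OF True] by simp
    finally show ?thesis using True by simp
  next
    case False
    then have "x \<notin> A j" for j using AK by blast
    then show ?thesis using False by simp
  qed
  define I where "I = (\<Sum>j<N. measure \<mu> (A j) *\<^sub>R g (k j))"
  have sp: "space \<mu> = UNIV" by (rule space_borelM[OF sets])
  show ?thesis
  proof (intro exI allI impI)
    fix \<phi> :: "'e \<Rightarrow> real" and B assume asm: "bounded_linear \<phi> \<and> 0 \<le> B \<and> (\<forall>x. \<bar>\<phi> x\<bar> \<le> B * norm x)"
    then have \<phi>: "bounded_linear \<phi>" and B: "0 \<le> B" and \<phi>B: "\<And>x. \<bar>\<phi> x\<bar> \<le> B * norm x" by auto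
    have \<phi>c: "continuous_on UNIV (\<lambda>x. \<phi> (g x))"
      by (intro continuous_on_compose2[OF bounded_linear.continuous_on[OF \<phi> continuous_on_id] g]) auto
    have int1: "integrable \<mu> (\<lambda>x. indicator (A j) x * \<phi> (g x))" for j
    proof (rule int_ind_cont[OF sets \<phi>c Ab Afin])
      fix x assume "x \<in> A j"
      then have "dist (g (k j)) (g x) < e" using AV unfolding V_def by auto
      then have "norm (g x) \<le> norm (g (k j)) + e" by (metis dist_commute dist_norm norm_triangle_sub add_mono less_imp_le order_trans add_le_cancel_left)
      then show "\<bar>\<phi> (g x)\<bar> \<le> B * (norm (g (k j)) + e)" using \<phi>B[of "g x"] B by (meson mult_left_mono order_trans)
    qed
    have int2: "integrable \<mu> (\<lambda>x. indicator (A j) x * c)" for j and c :: real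
    proof -
      have "integrable \<mu> (\<lambda>x. indicator (A j) x *\<^sub>R c)"
        by (rule integrable_indicator) (use Ab sets Afin in auto)
      then show ?thesis by simp
    qed
    have "\<phi> I = (\<Sum>j<N. measure \<mu> (A j) * \<phi> (g (k j)))"
      unfolding I_def using \<phi> by (simp add: linear_sum bounded_linear.linear linear_scale)
    also have "\<dots> = (\<Sum>j<N. \<integral>x. indicator (A j) x * \<phi> (g (k j)) \<partial>\<mu>)"
      using sp by simp
    finally have e1: "\<phi> I = (\<Sum>j<N. \<integral>x. indicator (A j) x * \<phi> (g (k j)) \<partial>\<mu>)" .
    have "(\<integral>x. indicator K x * \<phi> (g x) \<partial>\<mu>) = (\<integral>x. (\<Sum>j<N. indicator (A j) x * \<phi> (g x)) \<partial>\<mu>)"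
    proof (intro Bochner_Integration.integral_cong refl)
      fix x
      have "indicator K x * \<phi> (g x) = (if x \<in> K then \<phi> (g x) else 0)" by (simp add: indicator_def)
      also have "\<dots> = (\<Sum>j<N. indicator (A j) x * \<phi> (g x))" using sumid[of x "\<lambda>_. \<phi> (g x)"] by simp
      finally show "indicator K x * \<phi> (g x) = (\<Sum>j<N. indicator (A j) x * \<phi> (g x))" .
    qed
    also have "\<dots> = (\<Sum>j<N. \<integral>x. indicator (A j) x * \<phi> (g x) \<partial>\<mu>)"
      by (rule Bochner_Integration.integral_sum) (rule int1)
    finally have e2: "(\<integral>x. indicator K x * \<phi> (g x) \<partial>\<mu>) = (\<Sum>j<N. \<integral>x. indicator (A j) x * \<phi> (g x) \<partial>\<mu>)" .
    define h where "h x = (\<Sum>j<N. indicator (A j) x * (\<phi> (g (k j)) - \<phi> (g x)))" for x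
    have inth: "integrable \<mu> h" unfolding h_def
      using int1 int2 by (simp add: right_diff_distrib)
    have "\<phi> I - (\<integral>x. indicator K x * \<phi> (g x) \<partial>\<mu>) =
        (\<Sum>j<N. (\<integral>x. indicator (A j) x * \<phi> (g (k j)) \<partial>\<mu>) - (\<integral>x. indicator (A j) x * \<phi> (g x) \<partial>\<mu>))"
      unfolding e1 e2 by (simp add: sum_subtractf)
    also have "\<dots> = (\<Sum>j<N. \<integral>x. indicator (A j) x * (\<phi> (g (k j)) - \<phi> (g x)) \<partial>\<mu>)"
      using int1 int2 by (simp add: right_diff_distrib)
    also have "\<dots> = integral\<^sup>L \<mu> h" unfolding h_def
      by (rule Bochner_Integration.integral_sum[symmetric]) (use int1 int2 in \<open>simp add: right_diff_distrib\<close>)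
    finally have eq: "\<phi> I - (\<integral>x. indicator K x * \<phi> (g x) \<partial>\<mu>) = integral\<^sup>L \<mu> h" .
    have hb: "\<bar>h x\<bar> \<le> indicator K x * (B * e)" for x
    proof (cases "x \<in> K")
      case True
      have hx: "h x = \<phi> (g (k (j0 x))) - \<phi> (g x)" unfolding h_def sumid using True by simp
      have "x \<in> V (k (j0 x))" using j0[OF True] by blast
      then have d: "norm (g (k (j0 x)) - g x) < e" unfolding V_def by (simp add: dist_norm)
      have "\<bar>h x\<bar> = \<bar>\<phi> (g (k (j0 x)) - g x)\<bar>" unfolding hx using \<phi> by (simp add: linear_diff bounded_linear.linear)
      also have "\<dots> \<le> B * norm (g (k (j0 x)) - g x)" by (rule \<phi>B)
      also have "\<dots> \<le> B * e" using d B by (simp add: mult_left_mono)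
      finally show ?thesis using True by simp
    next
      case False
      then show ?thesis unfolding h_def sumid by simp
    qed
    have "\<bar>integral\<^sup>L \<mu> h\<bar> \<le> (\<integral>x. \<bar>h x\<bar> \<partial>\<mu>)"
      using Bochner_Integration.integral_norm_bound[of \<mu> h] by simp
    also have "\<dots> \<le> (\<integral>x. indicator K x * (B * e) \<partial>\<mu>)"
      by (rule Bochner_Integration.integral_mono)
         (use inth hb Kb K(2) sets in \<open>auto intro: integrable_abs simp: mult.commute[of "indicator K _"]\<close>)
    also have "\<dots> = B * e * measure \<mu> K" using sp by simp
    finally show "\<bar>\<phi> I - (\<integral>x. indicator K x * \<phi> (g x) \<partial>\<mu>)\<bar> \<le> B * e * measure \<mu> K" using eq by simp
  qed
qed


lemma pettis:
  fixes g :: "'g::t2_space \<Rightarrow> 'e::banach" and \<mu> :: "'g measure"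
  assumes sets: "sets \<mu> = sets borel" and g: "continuous_on UNIV g" and K: "compact K" "emeasure \<mu> K < \<infinity>"
  shows "\<exists>v. \<forall>\<phi>::'e\<Rightarrow>real. bounded_linear \<phi> \<longrightarrow> \<phi> v = (\<integral>x. indicator K x * \<phi> (g x) \<partial>\<mu>)"
proof -
  define m where "m = measure \<mu> K"
  have m0: "0 \<le> m" unfolding m_def by simp
  have "\<forall>n. \<exists>I. \<forall>\<phi> B. bounded_linear \<phi> \<and> 0 \<le> B \<and> (\<forall>x. \<bar>\<phi> x\<bar> \<le> B * norm x) \<longrightarrow>
            \<bar>\<phi> I - (\<integral>x. indicator K x * \<phi> (g x) \<partial>\<mu>)\<bar> \<le> B * inverse (real (Suc n)) * m"
    unfolding m_def by (intro allI pettis_approx[OF sets g K]) simp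
  then obtain I where I: "\<And>n \<phi> B. bounded_linear \<phi> \<Longrightarrow> 0 \<le> B \<Longrightarrow> (\<forall>x. \<bar>\<phi> x\<bar> \<le> B * norm x) \<Longrightarrow>
            \<bar>\<phi> (I n) - (\<integral>x. indicator K x * \<phi> (g x) \<partial>\<mu>)\<bar> \<le> B * inverse (real (Suc n)) * m"
    by metis
  have dist: "norm (I n - I k) \<le> inverse (real (Suc n)) * m + inverse (real (Suc k)) * m" for n k
  proof -
    obtain \<phi> :: "'e \<Rightarrow> real" where \<phi>: "bounded_linear \<phi>" "\<forall>x. \<bar>\<phi> x\<bar> \<le> norm x" "\<phi> (I n - I k) = norm (I n - I k)"
      using norming by blast
    have b: "\<forall>x. \<bar>\<phi> x\<bar> \<le> 1 * norm x" using \<phi>(2) by simp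
    have "norm (I n - I k) = \<phi> (I n) - \<phi> (I k)" using \<phi>(1,3) by (simp add: linear_diff bounded_linear.linear)
    also have "\<dots> \<le> inverse (real (Suc n)) * m + inverse (real (Suc k)) * m"
      using I[OF \<phi>(1) _ b, of n] I[OF \<phi>(1) _ b, of k] by simp
    finally show ?thesis .
  qed
  have "Cauchy I"
  proof (rule CauchyI)
    fix e :: real assume e: "0 < e"
    obtain M :: nat where M: "2 * m / e < real M" using reals_Archimedean2 by blast
    have "\<forall>n\<ge>M. \<forall>k\<ge>M. norm (I n - I k) < e"
    proof (intro allI impI)
      fix n k assume nk: "M \<le> n" "M \<le> k"
      have "inverse (real (Suc n)) * m \<le> inverse (real (Suc M)) * m"
        using nk m0 by (intro mult_right_mono) (auto simp: field_simps)
      moreover have "inverse (real (Suc k)) * m \<le> inverse (real (Suc M)) * m"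
        using nk m0 by (intro mult_right_mono) (auto simp: field_simps)
      moreover have "2 * (inverse (real (Suc M)) * m) < e"
      proof -
        have "2 * m < e * real M" using M e by (simp add: field_simps)
        also have "\<dots> \<le> e * real (Suc M)" using e by simp
        finally show ?thesis by (simp add: field_simps)
      qed
      ultimately show "norm (I n - I k) < e" using dist[of n k] by linarith
    qed
    then show "\<exists>M. \<forall>n\<ge>M. \<forall>k\<ge>M. norm (I n - I k) < e" by blast
  qed
  then obtain v where v: "I \<longlonglongrightarrow> v" using Cauchy_convergent_iff convergent_def by blast
  show ?thesis
  proof (intro exI allI impI)
    fix \<phi> :: "'e \<Rightarrow> real" assume \<phi>: "bounded_linear \<phi>"
    obtain B where B: "B > 0" "\<And>x. norm (\<phi> x) \<le> norm x * B" using bounded_linear.pos_bounded[OF \<phi>] by blast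
    have b: "\<forall>x. \<bar>\<phi> x\<bar> \<le> B * norm x" using B(2) by (simp add: mult.commute)
    let ?L = "\<integral>x. indicator K x * \<phi> (g x) \<partial>\<mu>"
    have t1: "(\<lambda>n. \<phi> (I n)) \<longlonglongrightarrow> \<phi> v" using bounded_linear.tendsto[OF \<phi> v] .
    have lim0: "(\<lambda>n. B * inverse (real (Suc n)) * m) \<longlonglongrightarrow> 0"
      using tendsto_mult[OF tendsto_mult[OF tendsto_const LIMSEQ_inverse_real_of_nat] tendsto_const, of B m] by simp
    have "(\<lambda>n. \<phi> (I n) - ?L) \<longlonglongrightarrow> 0"
      by (rule Lim_null_comparison[OF _ lim0]) (use I[OF \<phi> _ b] B in \<open>auto intro!: always_eventually\<close>)
    from tendsto_add[OF this tendsto_const[of ?L]] have t2: "(\<lambda>n. \<phi> (I n)) \<longlonglongrightarrow> ?L"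
      by simp
    show "\<phi> v = ?L" using LIMSEQ_unique[OF t1 t2] .
  qed
qed

lemma approx_id:
  fixes g :: "'g::t2_space \<Rightarrow> 'e::banach" and \<mu> :: "'g measure"
  assumes sets: "sets \<mu> = sets borel" and g: "continuous_on UNIV g"
    and pos: "\<And>U. open U \<Longrightarrow> U \<noteq> {} \<Longrightarrow> emeasure \<mu> U > 0"
    and inner: "\<And>U. open U \<Longrightarrow> emeasure \<mu> U = (SUP K\<in>{K. compact K \<and> K \<subseteq> U}. emeasure \<mu> K)"
    and fin: "\<And>K. compact K \<Longrightarrow> emeasure \<mu> K < \<infinity>"
    and e: "e > 0"
  shows "\<exists>f::'g\<Rightarrow>real. integrable \<mu> f \<and> (\<exists>v. (\<forall>\<phi>::'e\<Rightarrow>real. bounded_linear \<phi> \<longrightarrow> \<phi> v = (\<integral>x. f x * \<phi> (g x) \<partial>\<mu>)) \<and> dist v (g y) < e)"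
proof -
  define U where "U = g -` ball (g y) (e/2)"
  have Uo: "open U" unfolding U_def by (intro open_vimage g open_ball)
  have yU: "y \<in> U" unfolding U_def using e by simp
  have "0 < emeasure \<mu> U" using pos[OF Uo] yU by blast
  then obtain K where K: "compact K" "K \<subseteq> U" "0 < emeasure \<mu> K"
    unfolding inner[OF Uo] less_SUP_iff by blast
  have Kfin: "emeasure \<mu> K < \<infinity>" by (rule fin[OF K(1)])
  have Kb: "K \<in> sets borel" using K(1) by (simp add: borel_closed compact_imp_closed)
  define m where "m = measure \<mu> K"
  have "emeasure \<mu> K = ennreal m" unfolding m_def using Kfin by (simp add: emeasure_eq_ennreal_measure)
  then have m: "m > 0" using K(3) by simp
  have sp: "space \<mu> = UNIV" by (rule space_borelM[OF sets])
  obtain w where w: "\<And>\<phi>::'e\<Rightarrow>real. bounded_linear \<phi> \<Longrightarrow> \<phi> w = (\<integral>x. indicator K x * \<phi> (g x) \<partial>\<mu>)"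
    using pettis[OF sets g K(1) Kfin] by blast
  define f where "f x = indicator K x * (1 / m)" for x
  define v where "v = (1 / m) *\<^sub>R w"
  have intf: "integrable \<mu> f" unfolding f_def using Kb Kfin sets by simp
  have vrep: "\<phi> v = (\<integral>x. f x * \<phi> (g x) \<partial>\<mu>)" if \<phi>: "bounded_linear \<phi>" for \<phi> :: "'e \<Rightarrow> real"
  proof -
    have "\<phi> v = (1 / m) * \<phi> w" unfolding v_def using \<phi> by (simp add: linear_scale bounded_linear.linear)
    also have "\<dots> = (1 / m) * (\<integral>x. indicator K x * \<phi> (g x) \<partial>\<mu>)" using w[OF \<phi>] by simp
    also have "\<dots> = (\<integral>x. (1 / m) * (indicator K x * \<phi> (g x)) \<partial>\<mu>)" by simp
    also have "\<dots> = (\<integral>x. f x * \<phi> (g x) \<partial>\<mu>)" unfolding f_def by (simp add: mult.commute mult.left_commute)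
    finally show ?thesis .
  qed
  obtain \<phi> :: "'e \<Rightarrow> real" where \<phi>: "bounded_linear \<phi>" "\<forall>x. \<bar>\<phi> x\<bar> \<le> norm x" "\<phi> (v - g y) = norm (v - g y)"
    using norming by blast
  have \<phi>c: "continuous_on UNIV (\<lambda>x. \<phi> (g x))"
    by (intro continuous_on_compose2[OF bounded_linear.continuous_on[OF \<phi>(1) continuous_on_id] g]) auto
  have inK: "x \<in> K \<Longrightarrow> norm (g x - g y) < e / 2" for x using K(2) unfolding U_def by (auto simp: dist_norm norm_minus_commute)
  have int1: "integrable \<mu> (\<lambda>x. indicator K x * \<phi> (g x))"
  proof (rule int_ind_cont[OF sets \<phi>c Kb Kfin])
    fix x assume "x \<in> K"
    then have "norm (g x - g y) < e / 2" by (rule inK)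
    then have "norm (g x) \<le> norm (g y) + e / 2" by (metis norm_triangle_sub add_mono less_imp_le order_trans add_le_cancel_left add.commute)
    then show "\<bar>\<phi> (g x)\<bar> \<le> norm (g y) + e / 2" using \<phi>(2) order_trans by blast
  qed
  have int2: "integrable \<mu> (\<lambda>x. indicator K x * c)" for c :: real
  proof -
    have "integrable \<mu> (\<lambda>x. indicator K x *\<^sub>R c)"
      by (rule integrable_indicator) (use Kb sets Kfin in auto)
    then show ?thesis by simp
  qed
  have "norm (v - g y) = \<phi> v - \<phi> (g y)" using \<phi>(1,3) by (simp add: linear_diff bounded_linear.linear)
  also have "\<phi> v = (1 / m) * (\<integral>x. indicator K x * \<phi> (g x) \<partial>\<mu>)"
    unfolding vrep[OF \<phi>(1)] f_def by (simp add: mult.commute mult.left_commute)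
  also have "\<phi> (g y) = (1 / m) * (\<integral>x. indicator K x * \<phi> (g y) \<partial>\<mu>)"
    using m sp by (simp add: m_def[symmetric])
  also have "(1 / m) * (\<integral>x. indicator K x * \<phi> (g x) \<partial>\<mu>) - (1 / m) * (\<integral>x. indicator K x * \<phi> (g y) \<partial>\<mu>) =
      (1 / m) * (\<integral>x. indicator K x * \<phi> (g x) - indicator K x * \<phi> (g y) \<partial>\<mu>)"
    using int1 int2 by (simp add: right_diff_distrib)
  also have "\<dots> \<le> (1 / m) * (\<integral>x. indicator K x * (e / 2) \<partial>\<mu>)"
  proof (intro mult_left_mono Bochner_Integration.integral_mono)
    show "integrable \<mu> (\<lambda>x. indicator K x * \<phi> (g x) - indicator K x * \<phi> (g y))" using int1 int2 by simp
    show "integrable \<mu> (\<lambda>x. indicator K x * (e / 2))" by (rule int2)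
    fix x
    show "indicator K x * \<phi> (g x) - indicator K x * \<phi> (g y) \<le> indicator K x * (e / 2)"
    proof (cases "x \<in> K")
      case True
      have "\<phi> (g x) - \<phi> (g y) = \<phi> (g x - g y)" using \<phi>(1) by (simp add: linear_diff bounded_linear.linear)
      also have "\<dots> \<le> norm (g x - g y)" using \<phi>(2) by (meson abs_ge_self order_trans)
      finally show ?thesis using inK[OF True] True by simp
    qed simp
  qed (use m in simp)
  also have "\<dots> = e / 2" using m sp by (simp add: m_def[symmetric])
  finally have "dist v (g y) < e" using e by (simp add: dist_norm)
  then show ?thesis using intf vrep by blast
qed

lemma csubspace_closure:
  assumes S: "csubspace J S" and J: "bounded_linear J"
  shows "csubspace J (closure S)"
proof -
  have img: "f ` closure S \<subseteq> closure S" if f: "bounded_linear f" and fS: "\<And>x. x \<in> S \<Longrightarrow> f x \<in> S" for f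
    by (rule image_closure_subset) (use linear_continuous_on[OF f] fS closure_subset in auto)
  have S0: "0 \<in> S" and Sa: "\<And>x y. x \<in> S \<Longrightarrow> y \<in> S \<Longrightarrow> x + y \<in> S"
    and Ss: "\<And>r x. x \<in> S \<Longrightarrow> r *\<^sub>R x \<in> S" and SJ: "\<And>x. x \<in> S \<Longrightarrow> J x \<in> S"
    using S unfolding csubspace_def by auto
  have "0 \<in> closure S" using S0 closure_subset by blast
  moreover have "x + y \<in> closure S" if xy: "x \<in> closure S" "y \<in> closure S" for x y
    unfolding closure_approachable
  proof (intro allI impI)
    fix e :: real assume e: "e > 0"
    obtain x' where x': "x' \<in> S" "dist x' x < e / 2" using xy(1) e unfolding closure_approachable by (meson half_gt_zero)
    obtain y' where y': "y' \<in> S" "dist y' y < e / 2" using xy(2) e unfolding closure_approachable by (meson half_gt_zero)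
    have "x' + y' \<in> S" using Sa x' y' by blast
    moreover have "dist (x' + y') (x + y) < e"
      using dist_triangle_add[of x' y' x y] x'(2) y'(2) by simp
    ultimately show "\<exists>z\<in>S. dist z (x + y) < e" by blast
  qed
  moreover have "r *\<^sub>R x \<in> closure S" if x: "x \<in> closure S" for r x
  proof -
    have "scaleR r ` closure S \<subseteq> closure S"
      by (rule img[OF bounded_linear_scaleR_right Ss])
    then show ?thesis using x by (rule subsetD[OF _ imageI])
  qed
  moreover have "J x \<in> closure S" if x: "x \<in> closure S" for x
  proof -
    have "J ` closure S \<subseteq> closure S"
      by (rule img[OF J SJ])
    then show ?thesis using x by (rule subsetD[OF _ imageI])
  qed
  ultimately show ?thesis unfolding csubspace_def by auto
qed

lemma int_mult_bounded:
  fixes a h :: "'a \<Rightarrow> real"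
  assumes a: "integrable \<mu> a" and h: "h \<in> borel_measurable \<mu>" and b: "\<And>x. \<bar>h x\<bar> \<le> C"
  shows "integrable \<mu> (\<lambda>x. a x * h x)"
proof (rule Bochner_Integration.integrable_bound)
  show "integrable \<mu> (\<lambda>x. a x * C)" using a by simp
  show "(\<lambda>x. a x * h x) \<in> borel_measurable \<mu>" using borel_measurable_integrable[OF a] h by (intro borel_measurable_times)
  show "AE x in \<mu>. norm (a x * h x) \<le> norm (a x * C)"
  proof (intro AE_I2)
    fix x
    have "\<bar>a x\<bar> * \<bar>h x\<bar> \<le> \<bar>a x\<bar> * \<bar>C\<bar>" using b[of x] by (intro mult_left_mono) auto
    then show "norm (a x * h x) \<le> norm (a x * C)" by (simp add: abs_mult)
  qed
qed

lemma cscale_lin: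
  assumes "bounded_linear \<phi>"
  shows "\<phi> (cscale J c w) = Re c * \<phi> w + Im c * \<phi> (J w)"
  unfolding cscale_def using assms by (simp add: linear_add linear_scale bounded_linear.linear)

locale repctx =
  fixes \<mu> :: "'g::{topological_group_add, t2_space} measure" and J :: "'e::banach \<Rightarrow> 'e" and \<pi> :: "'g \<Rightarrow> 'e \<Rightarrow> 'e"
  assumes haar: "left_haar \<mu>" and J: "complex_structure J" and rep: "is_rep J \<pi>"
begin

lemma sets: "sets \<mu> = sets borel" using haar unfolding left_haar_def by (elim conjE) assumption
lemma Jparts1: "bounded_linear J" using J unfolding complex_structure_def by (elim conjE) assumption
lemma Jparts2: "\<forall>x. J (J x) = - x" using J unfolding complex_structure_def by (elim conjE) assumption
lemmas Jparts = Jparts1 Jparts2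
lemma Jl: "bounded_linear J" by (rule Jparts(1))
lemma JJ: "J (J x) = - x" using Jparts(2) by simp
lemma rep_all: "\<forall>x. bounded_linear (\<pi> x) \<and> (\<forall>v. \<pi> x (J v) = J (\<pi> x v)) \<and> (\<forall>v. norm (\<pi> x v) = norm v) \<and> surj (\<pi> x)"
  using rep unfolding is_rep_def by (elim conjE) assumption
lemma rep_hom: "\<forall>x y. \<pi> (x + y) = \<pi> x \<circ> \<pi> y" using rep unfolding is_rep_def by (elim conjE) assumption
lemma rep_0: "\<pi> 0 = id" using rep unfolding is_rep_def by (elim conjE) assumption
lemma rep_c: "\<forall>v. continuous_on UNIV (\<lambda>x. \<pi> x v)" using rep unfolding is_rep_def by (elim conjE) assumption
lemma \<pi>l: "bounded_linear (\<pi> x)" using rep_all by simp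
lemma \<pi>J: "\<pi> x (J v) = J (\<pi> x v)" using rep_all by simp
lemma \<pi>n: "norm (\<pi> x v) = norm v" using rep_all by simp
lemma \<pi>hom: "\<pi> (x + y) v = \<pi> x (\<pi> y v)" using rep_hom by simp
lemma \<pi>0: "\<pi> 0 v = v" using rep_0 by simp
lemma \<pi>c: "continuous_on UNIV (\<lambda>x. \<pi> x v)" using rep_c by simp

lemma int_orbit:
  assumes f: "integrable \<mu> f" and \<phi>: "bounded_linear (\<phi> :: 'e \<Rightarrow> real)"
  shows "integrable \<mu> (\<lambda>x. \<phi> (cscale J (f x) (\<pi> x \<xi>)))"
proof -
  obtain B where B: "\<And>x. norm (\<phi> x) \<le> norm x * B" "B > 0" using bounded_linear.pos_bounded[OF \<phi>] by blast
  obtain BJ where BJ: "\<And>x. norm (J x) \<le> norm x * BJ" using bounded_linear.bounded[OF Jl] by blast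
  have c1: "continuous_on UNIV (\<lambda>x. \<phi> (\<pi> x \<xi>))"
    by (intro continuous_on_compose2[OF linear_continuous_on[OF \<phi>] \<pi>c]) auto
  have c2: "continuous_on UNIV (\<lambda>x. \<phi> (J (\<pi> x \<xi>)))"
    by (intro continuous_on_compose2[OF linear_continuous_on[OF bounded_linear_compose[OF \<phi> Jl]] \<pi>c]) auto
  have i1: "integrable \<mu> (\<lambda>x. Re (f x) * \<phi> (\<pi> x \<xi>))"
  proof (rule int_mult_bounded)
    show "integrable \<mu> (\<lambda>x. Re (f x))" using integrable_bounded_linear[OF bounded_linear_Re f] .
    show "(\<lambda>x. \<phi> (\<pi> x \<xi>)) \<in> borel_measurable \<mu>" by (rule meas_cont[OF sets c1])
    fix x show "\<bar>\<phi> (\<pi> x \<xi>)\<bar> \<le> norm \<xi> * B" using B(1)[of "\<pi> x \<xi>"] \<pi>n by simp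
  qed
  have i2: "integrable \<mu> (\<lambda>x. Im (f x) * \<phi> (J (\<pi> x \<xi>)))"
  proof (rule int_mult_bounded)
    show "integrable \<mu> (\<lambda>x. Im (f x))" using integrable_bounded_linear[OF bounded_linear_Im f] .
    show "(\<lambda>x. \<phi> (J (\<pi> x \<xi>))) \<in> borel_measurable \<mu>" by (rule meas_cont[OF sets c2])
    fix x
    have "\<bar>\<phi> (J (\<pi> x \<xi>))\<bar> \<le> norm (J (\<pi> x \<xi>)) * B" using B(1) by simp
    also have "\<dots> \<le> (norm \<xi> * BJ) * B"
      using BJ[of "\<pi> x \<xi>"] \<pi>n[of x \<xi>] B(2) by (intro mult_right_mono) auto
    finally show "\<bar>\<phi> (J (\<pi> x \<xi>))\<bar> \<le> norm \<xi> * BJ * B" .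
  qed
  show ?thesis using Bochner_Integration.integrable_add[OF i1 i2] by (simp add: cscale_lin[OF \<phi>])
qed

lemma orbit_csub: "csubspace J (L1_orbit \<mu> J \<pi> \<xi>)"
  unfolding csubspace_def
proof (intro conjI ballI allI)
  show "0 \<in> L1_orbit \<mu> J \<pi> \<xi>" unfolding L1_orbit_def
    by (intro CollectI exI[of _ "\<lambda>_. 0"]) (auto simp: cscale_def linear_simps)
next
  fix v w assume v: "v \<in> L1_orbit \<mu> J \<pi> \<xi>" and w: "w \<in> L1_orbit \<mu> J \<pi> \<xi>"
  obtain f where f: "integrable \<mu> f" "\<And>\<phi>::'e\<Rightarrow>real. bounded_linear \<phi> \<Longrightarrow> \<phi> v = (\<integral>x. \<phi> (cscale J (f x) (\<pi> x \<xi>)) \<partial>\<mu>)"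
    using v unfolding L1_orbit_def by blast
  obtain g where g: "integrable \<mu> g" "\<And>\<phi>::'e\<Rightarrow>real. bounded_linear \<phi> \<Longrightarrow> \<phi> w = (\<integral>x. \<phi> (cscale J (g x) (\<pi> x \<xi>)) \<partial>\<mu>)"
    using w unfolding L1_orbit_def by blast
  show "v + w \<in> L1_orbit \<mu> J \<pi> \<xi>" unfolding L1_orbit_def
  proof (intro CollectI exI[of _ "\<lambda>x. f x + g x"] conjI allI impI)
    show "integrable \<mu> (\<lambda>x. f x + g x)" using f(1) g(1) by simp
    fix \<phi> :: "'e \<Rightarrow> real" assume \<phi>: "bounded_linear \<phi>"
    have "\<phi> (v + w) = \<phi> v + \<phi> w" using \<phi> by (simp add: linear_add bounded_linear.linear)
    also have "\<dots> = (\<integral>x. \<phi> (cscale J (f x) (\<pi> x \<xi>)) + \<phi> (cscale J (g x) (\<pi> x \<xi>)) \<partial>\<mu>)"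
      using f(2)[OF \<phi>] g(2)[OF \<phi>] int_orbit[OF f(1) \<phi>] int_orbit[OF g(1) \<phi>] by simp
    also have "\<dots> = (\<integral>x. \<phi> (cscale J (f x + g x) (\<pi> x \<xi>)) \<partial>\<mu>)"
      by (simp add: cscale_lin[OF \<phi>] algebra_simps)
    finally show "\<phi> (v + w) = (\<integral>x. \<phi> (cscale J (f x + g x) (\<pi> x \<xi>)) \<partial>\<mu>)" .
  qed
next
  fix r :: real and v assume v: "v \<in> L1_orbit \<mu> J \<pi> \<xi>"
  obtain f where f: "integrable \<mu> f" "\<And>\<phi>::'e\<Rightarrow>real. bounded_linear \<phi> \<Longrightarrow> \<phi> v = (\<integral>x. \<phi> (cscale J (f x) (\<pi> x \<xi>)) \<partial>\<mu>)"
    using v unfolding L1_orbit_def by blast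
  show "r *\<^sub>R v \<in> L1_orbit \<mu> J \<pi> \<xi>" unfolding L1_orbit_def
  proof (intro CollectI exI[of _ "\<lambda>x. of_real r * f x"] conjI allI impI)
    show "integrable \<mu> (\<lambda>x. of_real r * f x)" using f(1) by simp
    fix \<phi> :: "'e \<Rightarrow> real" assume \<phi>: "bounded_linear \<phi>"
    have "\<phi> (r *\<^sub>R v) = r * \<phi> v" using \<phi> by (simp add: linear_scale bounded_linear.linear)
    also have "\<dots> = (\<integral>x. r * \<phi> (cscale J (f x) (\<pi> x \<xi>)) \<partial>\<mu>)" using f(2)[OF \<phi>] by simp
    also have "\<dots> = (\<integral>x. \<phi> (cscale J (of_real r * f x) (\<pi> x \<xi>)) \<partial>\<mu>)"
      by (simp add: cscale_lin[OF \<phi>] algebra_simps)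
    finally show "\<phi> (r *\<^sub>R v) = (\<integral>x. \<phi> (cscale J (of_real r * f x) (\<pi> x \<xi>)) \<partial>\<mu>)" .
  qed
next
  fix v assume v: "v \<in> L1_orbit \<mu> J \<pi> \<xi>"
  obtain f where f: "integrable \<mu> f" "\<And>\<phi>::'e\<Rightarrow>real. bounded_linear \<phi> \<Longrightarrow> \<phi> v = (\<integral>x. \<phi> (cscale J (f x) (\<pi> x \<xi>)) \<partial>\<mu>)"
    using v unfolding L1_orbit_def by blast
  show "J v \<in> L1_orbit \<mu> J \<pi> \<xi>" unfolding L1_orbit_def
  proof (intro CollectI exI[of _ "\<lambda>x. \<i> * f x"] conjI allI impI)
    show "integrable \<mu> (\<lambda>x. \<i> * f x)" using f(1) by simp
    fix \<phi> :: "'e \<Rightarrow> real" assume \<phi>: "bounded_linear \<phi>"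
    have \<phi>J: "bounded_linear (\<lambda>x. \<phi> (J x))" using bounded_linear_compose[OF \<phi> Jl] .
    have "\<phi> (J v) = (\<integral>x. \<phi> (J (cscale J (f x) (\<pi> x \<xi>))) \<partial>\<mu>)" using f(2)[OF \<phi>J] .
    also have "\<dots> = (\<integral>x. \<phi> (cscale J (\<i> * f x) (\<pi> x \<xi>)) \<partial>\<mu>)"
      using Jl by (simp add: cscale_def linear_simps JJ)
    finally show "\<phi> (J v) = (\<integral>x. \<phi> (cscale J (\<i> * f x) (\<pi> x \<xi>)) \<partial>\<mu>)" .
  qed
qed

end

lemma csubspace_Inter: "(\<And>S. S \<in> SS \<Longrightarrow> csubspace J S) \<Longrightarrow> csubspace J (\<Inter>SS)"
  unfolding csubspace_def by blast

lemma cdual_restrict: "cdual J UNIV s \<Longrightarrow> cdual J F s"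
  unfolding cdual_def by blast

context repctx
begin

lemma haar_pos: "open U \<Longrightarrow> U \<noteq> {} \<Longrightarrow> emeasure \<mu> U > 0"
proof -
  have "\<forall>U. open U \<and> U \<noteq> {} \<longrightarrow> emeasure \<mu> U > 0" using haar unfolding left_haar_def by (elim conjE) assumption
  then show "open U \<Longrightarrow> U \<noteq> {} \<Longrightarrow> emeasure \<mu> U > 0" by blast
qed

lemma haar_inner: "open U \<Longrightarrow> emeasure \<mu> U = (SUP K\<in>{K. compact K \<and> K \<subseteq> U}. emeasure \<mu> K)"
proof -
  have "\<forall>U. open U \<longrightarrow> emeasure \<mu> U = (SUP K\<in>{K. compact K \<and> K \<subseteq> U}. emeasure \<mu> K)"
    using haar unfolding left_haar_def by (elim conjE) assumption
  then show "open U \<Longrightarrow> emeasure \<mu> U = (SUP K\<in>{K. compact K \<and> K \<subseteq> U}. emeasure \<mu> K)" by blast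
qed

lemma haar_fin: "compact K \<Longrightarrow> emeasure \<mu> K < \<infinity>"
proof -
  have "\<forall>K. compact K \<longrightarrow> emeasure \<mu> K < \<infinity>" using haar unfolding left_haar_def by (elim conjE) assumption
  then show "compact K \<Longrightarrow> emeasure \<mu> K < \<infinity>" by blast
qed

lemma orbit_approx: "\<pi> y \<xi> \<in> closure (L1_orbit \<mu> J \<pi> \<xi>)"
  unfolding closure_approachable
proof (intro allI impI)
  fix e :: real assume e: "e > 0"
  have ex: "\<exists>f::'g\<Rightarrow>real. integrable \<mu> f \<and> (\<exists>v. (\<forall>\<phi>::'e\<Rightarrow>real. bounded_linear \<phi> \<longrightarrow> \<phi> v = (\<integral>x. f x * \<phi> (\<pi> x \<xi>) \<partial>\<mu>)) \<and> dist v (\<pi> y \<xi>) < e)"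
    by (rule approx_id[OF sets \<pi>c[of \<xi>] haar_pos haar_inner haar_fin e])
  then obtain f :: "'g \<Rightarrow> real" where fex: "integrable \<mu> f \<and>
    (\<exists>v. (\<forall>\<phi>::'e\<Rightarrow>real. bounded_linear \<phi> \<longrightarrow> \<phi> v = (\<integral>x. f x * \<phi> (\<pi> x \<xi>) \<partial>\<mu>)) \<and> dist v (\<pi> y \<xi>) < e)"
    by (rule exE)
  note f = conjunct1[OF fex] and ex2 = conjunct2[OF fex]
  from ex2 obtain v where v: "\<forall>\<phi>::'e\<Rightarrow>real. bounded_linear \<phi> \<longrightarrow> \<phi> v = (\<integral>x. f x * \<phi> (\<pi> x \<xi>) \<partial>\<mu>)"
    and d: "dist v (\<pi> y \<xi>) < e" by (elim exE conjE) (rule that)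
  have "v \<in> L1_orbit \<mu> J \<pi> \<xi>" unfolding L1_orbit_def
  proof (intro CollectI exI[of _ "\<lambda>x. complex_of_real (f x)"] conjI allI impI)
    show "integrable \<mu> (\<lambda>x. complex_of_real (f x))"
      using integrable_bounded_linear[OF bounded_linear_of_real f] .
    fix \<phi> :: "'e \<Rightarrow> real" assume \<phi>: "bounded_linear \<phi>"
    show "\<phi> v = (\<integral>x. \<phi> (cscale J (complex_of_real (f x)) (\<pi> x \<xi>)) \<partial>\<mu>)"
      using v \<phi> by (simp add: cscale_lin[OF \<phi>])
  qed
  then show "\<exists>v\<in>L1_orbit \<mu> J \<pi> \<xi>. dist v (\<pi> y \<xi>) < e" using d by blast
qed

definition genS where "genS \<xi> = \<Inter>{S. closed S \<and> csubspace J S \<and> (\<forall>x. \<pi> x \<xi> \<in> S)}"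

lemma gen_mem: "\<xi> \<in> genS \<xi>"
  unfolding genS_def using \<pi>0[of \<xi>] by (metis (mono_tags, lifting) InterI mem_Collect_eq)

lemma gen_csub: "csubspace J (genS \<xi>)"
  unfolding genS_def by (rule csubspace_Inter) blast

lemma gen_inv: "\<pi> y ` genS \<xi> \<subseteq> genS \<xi>"
proof
  fix w assume "w \<in> \<pi> y ` genS \<xi>"
  then obtain v where v: "v \<in> genS \<xi>" "w = \<pi> y v" by blast
  show "w \<in> genS \<xi>" unfolding genS_def
  proof (rule InterI)
    fix S assume "S \<in> {S. closed S \<and> csubspace J S \<and> (\<forall>x. \<pi> x \<xi> \<in> S)}"
    then have S: "closed S" "csubspace J S" "\<And>x. \<pi> x \<xi> \<in> S" by auto
    have S0: "0 \<in> S" and Sa: "\<And>x y. x \<in> S \<Longrightarrow> y \<in> S \<Longrightarrow> x + y \<in> S"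
      and Ss: "\<And>r x. x \<in> S \<Longrightarrow> r *\<^sub>R x \<in> S" and SJ: "\<And>x. x \<in> S \<Longrightarrow> J x \<in> S"
      using S(2) unfolding csubspace_def by auto
    have lin: "linear (\<pi> y)" using \<pi>l bounded_linear.linear by blast
    have "closed (\<pi> y -` S)" by (rule closed_vimage[OF S(1) linear_continuous_on[OF \<pi>l]])
    moreover have "csubspace J (\<pi> y -` S)" unfolding csubspace_def
      using S0 Sa Ss SJ lin by (simp add: linear_0 linear_add linear_scale \<pi>J)
    moreover have "\<forall>x. \<pi> x \<xi> \<in> \<pi> y -` S" using S(3) by (simp add: \<pi>hom[symmetric])
    ultimately have "\<pi> y -` S \<in> {S. closed S \<and> csubspace J S \<and> (\<forall>x. \<pi> x \<xi> \<in> S)}" by blast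
    then have "v \<in> \<pi> y -` S" using v(1) unfolding genS_def by blast
    then show "w \<in> S" using v(2) by simp
  qed
qed

lemma gen_cyclic: "cyclic_sub \<mu> J \<pi> (genS \<xi>)"
proof -
  have "closed (genS \<xi>)" unfolding genS_def by (rule closed_Inter) blast
  moreover have "genS \<xi> \<subseteq> closure (L1_orbit \<mu> J \<pi> \<xi>)"
  proof -
    have "closure (L1_orbit \<mu> J \<pi> \<xi>) \<in> {S. closed S \<and> csubspace J S \<and> (\<forall>x. \<pi> x \<xi> \<in> S)}"
      using csubspace_closure[OF orbit_csub Jl] orbit_approx by blast
    then show ?thesis unfolding genS_def by (rule Inter_lower)
  qed
  ultimately show ?thesis unfolding cyclic_sub_def using gen_csub gen_inv gen_mem by blast
qed

end

lemma inf_eq_aux: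
  fixes A R :: "real set"
  assumes Ane: "A \<noteq> {}" and An: "\<And>a. a \<in> A \<Longrightarrow> 0 \<le> a" and Rn: "\<And>r. r \<in> R \<Longrightarrow> 0 \<le> r"
    and AR: "\<And>a. a \<in> A \<Longrightarrow> \<exists>r\<in>R. r \<le> a" and RA: "\<And>r. r \<in> R \<Longrightarrow> \<exists>a\<in>A. a \<le> r"
  shows "Inf A = Inf R"
proof -
  have Rne: "R \<noteq> {}" using Ane AR by blast
  have bA: "bdd_below A" using An by (rule bdd_belowI)
  have bR: "bdd_below R" using Rn by (rule bdd_belowI)
  have "Inf A \<le> Inf R"
  proof (rule cInf_greatest[OF Rne])
    fix r assume "r \<in> R"
    then obtain a where "a \<in> A" "a \<le> r" using RA by blast
    then show "Inf A \<le> r" using cInf_lower[OF _ bA] by (meson order_trans)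
  qed
  moreover have "Inf R \<le> Inf A"
  proof (rule cInf_greatest[OF Ane])
    fix a assume "a \<in> A"
    then obtain r where "r \<in> R" "r \<le> a" using AR by blast
    then show "Inf R \<le> a" using cInf_lower[OF _ bR] by (meson order_trans)
  qed
  ultimately show ?thesis by simp
qed

context repctx
begin

lemma main:
  fixes u :: "'g \<Rightarrow> complex"
  assumes Amem: "A_mem J \<pi> u"
  shows "A_norm J \<pi> u = Inf {(\<Sum>n. norm (t n) * dual_norm (F n) (s n)) | F t s.
            (\<forall>n. cyclic_sub \<mu> J \<pi> (F n) \<and> t n \<in> F n \<and> cdual J (F n) (s n)) \<and>
            summable (\<lambda>n. norm (t n) * dual_norm (F n) (s n)) \<and>
            (\<forall>x. (\<lambda>n. s n (\<pi> x (t n))) sums u x)}"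
    (is "_ = Inf ?R")
proof -
  let ?A = "A_reps J \<pi> u"
  have Ane: "?A \<noteq> {}" using Amem unfolding A_mem_def .
  have Anonneg: "0 \<le> a" if "a \<in> ?A" for a
  proof -
    obtain \<xi> :: "nat \<Rightarrow> 'e" and \<eta> where a: "a = (\<Sum>n. norm (\<xi> n) * dual_norm UNIV (\<eta> n))" and c: "\<forall>n. cdual J UNIV (\<eta> n)"
      and sm: "summable (\<lambda>n. norm (\<xi> n) * dual_norm UNIV (\<eta> n))"
      using \<open>a \<in> ?A\<close> unfolding A_reps_def by blast
    have "\<forall>n. 0 \<le> norm (\<xi> n) * dual_norm UNIV (\<eta> n)"
      using c by (intro allI mult_nonneg_nonneg norm_ge_zero dual_norm_nonneg[of J]) auto
    then show ?thesis unfolding a by (intro suminf_nonneg sm) auto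
  qed
  have Rnonneg: "0 \<le> r" if "r \<in> ?R" for r
  proof -
    obtain F t s where r: "r = (\<Sum>n. norm (t n) * dual_norm (F n) (s n))"
      and c: "\<forall>n. cyclic_sub \<mu> J \<pi> (F n) \<and> t n \<in> F n \<and> cdual J (F n) (s n)"
      and sm: "summable (\<lambda>n. norm (t n) * dual_norm (F n) (s n))"
      using \<open>r \<in> ?R\<close> by blast
    have "0 \<le> norm (t n) * dual_norm (F n) (s n)" for n
    proof -
      have "0 \<in> F n" using c unfolding cyclic_sub_def csubspace_def by blast
      then show ?thesis using c by (intro mult_nonneg_nonneg norm_ge_zero dual_norm_nonneg[of J]) auto
    qed
    then show ?thesis unfolding r by (intro suminf_nonneg sm) auto
  qed
  have AR: "\<exists>r\<in>?R. r \<le> a" if "a \<in> ?A" for a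
  proof -
    obtain \<xi> \<eta> where a: "a = (\<Sum>n. norm (\<xi> n) * dual_norm UNIV (\<eta> n))" and c: "\<forall>n. cdual J UNIV (\<eta> n)"
      and sm: "summable (\<lambda>n. norm (\<xi> n) * dual_norm UNIV (\<eta> n))"
      and su: "\<forall>x. (\<lambda>n. \<eta> n (\<pi> x (\<xi> n))) sums u x"
      using \<open>a \<in> ?A\<close> unfolding A_reps_def by blast
    define F where "F n = genS (\<xi> n)" for n
    have cF: "cyclic_sub \<mu> J \<pi> (F n) \<and> \<xi> n \<in> F n \<and> cdual J (F n) (\<eta> n)" for n
      unfolding F_def using gen_cyclic gen_mem cdual_restrict c by blast
    have le: "norm (\<xi> n) * dual_norm (F n) (\<eta> n) \<le> norm (\<xi> n) * dual_norm UNIV (\<eta> n)" for n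
    proof (rule mult_left_mono)
      have "0 \<in> F n" using gen_csub unfolding F_def csubspace_def by blast
      then show "dual_norm (F n) (\<eta> n) \<le> dual_norm UNIV (\<eta> n)" using dual_norm_mono c by blast
    qed simp
    have nn: "0 \<le> norm (\<xi> n) * dual_norm (F n) (\<eta> n)" for n
    proof -
      have "0 \<in> F n" using gen_csub unfolding F_def csubspace_def by blast
      then show ?thesis using cF by (intro mult_nonneg_nonneg norm_ge_zero dual_norm_nonneg[of J]) auto
    qed
    have sm2: "summable (\<lambda>n. norm (\<xi> n) * dual_norm (F n) (\<eta> n))"
      by (rule summable_comparison_test'[OF sm, of 0]) (use le nn in auto)
    have "(\<Sum>n. norm (\<xi> n) * dual_norm (F n) (\<eta> n)) \<in> ?R" using cF sm2 su by blast
    moreover have "(\<Sum>n. norm (\<xi> n) * dual_norm (F n) (\<eta> n)) \<le> a"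
      unfolding a by (rule suminf_le[OF le sm2 sm])
    ultimately show ?thesis by blast
  qed
  have RA: "\<exists>a\<in>?A. a \<le> r" if "r \<in> ?R" for r
  proof -
    obtain F t s where r: "r = (\<Sum>n. norm (t n) * dual_norm (F n) (s n))"
      and c: "\<forall>n. cyclic_sub \<mu> J \<pi> (F n) \<and> t n \<in> F n \<and> cdual J (F n) (s n)"
      and sm: "summable (\<lambda>n. norm (t n) * dual_norm (F n) (s n))"
      and su: "\<forall>x. (\<lambda>n. s n (\<pi> x (t n))) sums u x"
      using \<open>r \<in> ?R\<close> by blast
    have csF: "csubspace J (F n)" for n using c unfolding cyclic_sub_def by blast
    have invF: "\<pi> x ` F n \<subseteq> F n" for x n using c unfolding cyclic_sub_def by blast
    have "\<forall>n. \<exists>\<eta>. cdual J UNIV \<eta> \<and> (\<forall>x\<in>F n. \<eta> x = s n x) \<and> dual_norm UNIV \<eta> \<le> dual_norm (F n) (s n)"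
      using complex_HB[OF J csF] c by blast
    then obtain \<eta> where \<eta>: "\<And>n. cdual J UNIV (\<eta> n)" "\<And>n x. x \<in> F n \<Longrightarrow> \<eta> n x = s n x"
      "\<And>n. dual_norm UNIV (\<eta> n) \<le> dual_norm (F n) (s n)" by metis
    have le: "norm (t n) * dual_norm UNIV (\<eta> n) \<le> norm (t n) * dual_norm (F n) (s n)" for n
      using \<eta>(3) by (rule mult_left_mono) simp
    have nn: "0 \<le> norm (t n) * dual_norm UNIV (\<eta> n)" for n
      using \<eta>(1) by (intro mult_nonneg_nonneg norm_ge_zero dual_norm_nonneg[of J]) auto
    have sm2: "summable (\<lambda>n. norm (t n) * dual_norm UNIV (\<eta> n))"
      by (rule summable_comparison_test'[OF sm, of 0]) (use le nn in auto)
    have su2: "\<forall>x. (\<lambda>n. \<eta> n (\<pi> x (t n))) sums u x"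
    proof
      fix x
      have "\<eta> n (\<pi> x (t n)) = s n (\<pi> x (t n))" for n using \<eta>(2) invF c by blast
      then show "(\<lambda>n. \<eta> n (\<pi> x (t n))) sums u x" using su by simp
    qed
    have "(\<Sum>n. norm (t n) * dual_norm UNIV (\<eta> n)) \<in> ?A"
      unfolding A_reps_def using \<eta>(1) sm2 su2 by blast
    moreover have "(\<Sum>n. norm (t n) * dual_norm UNIV (\<eta> n)) \<le> r"
      unfolding r by (rule suminf_le[OF le sm2 sm])
    ultimately show ?thesis by blast
  qed
  have "Inf ?A = Inf ?R"
    by (rule inf_eq_aux[OF Ane Anonneg Rnonneg AR RA])
  then show ?thesis unfolding A_norm_def .
qed

end

theorem proposition1:
  fixes \<mu> :: "'g::{topological_group_add, t2_space} measure"
    and J :: "'e::banach \<Rightarrow> 'e"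
    and \<pi> :: "'g \<Rightarrow> 'e \<Rightarrow> 'e"
    and M :: "'m measure"
    and p :: real
    and u :: "'g \<Rightarrow> complex"
  assumes "locally_compact_space (euclidean :: 'g topology)"
    and "left_haar \<mu>"
    and "1 < p"
    and "complex_structure J"
    and "QSL p J M"
    and "is_rep J \<pi>"
    and "A_mem J \<pi> u"
  shows "A_norm J \<pi> u = Inf {(\<Sum>n. norm (t n) * dual_norm (F n) (s n)) | F t s.
            (\<forall>n. cyclic_sub \<mu> J \<pi> (F n) \<and> t n \<in> F n \<and> cdual J (F n) (s n)) \<and>
            summable (\<lambda>n. norm (t n) * dual_norm (F n) (s n)) \<and>
            (\<forall>x. (\<lambda>n. s n (\<pi> x (t n))) sums u x)}"
proof -
  interpret repctx \<mu> J \<pi> by unfold_locales (use assms in auto)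
  show ?thesis by (rule main) (rule assms(7))
qed

end
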